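(* Let $k\ge2$ and $n\ge1$ be integers. A function $f:\mathcal{S}_k^n\to\mathbf{R}\cup\{\infty\}$ is $k$-submodular if and only if $f$ is submodular on the modular semilattice $\mathcal{S}_k^n$.
   Context: $\mathcal{S}_k$ is the $(k+1)$-element poset consisting of a minimum $0$ and $k$ pairwise incomparable elements covering $0$; $\mathcal{S}_k^n$ has the componentwise order (a modular semilattice; rank $r(p)=$ number of nonzero coordinates). For $p,q\in\mathcal{S}_k^n$: $(p\wedge q)_i=p_i$ if $p_i=q_i$ and $0$ otherwise; $(p\sqcup q)_i=p_i\vee q_i$ if $p_i,q_i$ are comparable (equal or one is $0$) and $0$ if $0\ne p_i\ne q_i\ne0$. $f$ is $k$-submodular if $f(p)+f(q)\ge f(p\wedge q)+f(p\sqcup q)$ for all $p,q$. Submodularity on a modular semilattice $\mathcal{L}$ (rank $r$): for $p,q$ let $I(p,q)$ be the elements on shortest $p$–$q$ paths of the covering graph; $r(u;p,q)=(r(u\wedge p)-r(p\wedge q),r(u\wedge q)-r(p\wedge q))$; $\mathcal{E}(p,q)$ the $u\in I(p,q)$ with $r(u;p,q)$ a componentwise-maximal extreme point of the convex hull $\mathrm{Conv}I(p,q)$; $C(u;p,q)=\{w\in\mathbf{R}^2_{\ge0}:\langle w,r(u;p,q)\rangle=\max_{z\in\mathrm{Conv}I(p,q)}\langle w,z\rangle\}=\{(x,y)\ge0:y\cos\alpha\le x\sin\alpha,\ y\cos\beta\ge x\sin\beta\}$ ($0\le\beta\le\alpha\le\pi/2$), $[C]=\frac{\sin\alpha}{\sin\alpha+\cos\alpha}-\frac{\sin\beta}{\sin\beta+\cos\beta}$.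 $f$ is submodular if $f(p)+f(q)\ge f(p\wedge q)+\sum_{u\in\mathcal{E}(p,q)}[C(u;p,q)]f(u)$ for all $p,q$ (zero-coefficient terms omitted; $a+\infty=\infty$). *)

theory Defs
  imports "HOL-Analysis.Analysis"
begin

text \<open>An element of S_k^n is a function nat => nat with coordinates i < n in {0..k}
  and all coordinates i >= n equal to 0 (canonical representative).\<close>

definition Skn :: "nat \<Rightarrow> nat \<Rightarrow> (nat \<Rightarrow> nat) set" where
  "Skn k n = {p. (\<forall>i<n. p i \<le> k) \<and> (\<forall>i\<ge>n. p i = 0)}"

definition Sle :: "(nat \<Rightarrow> nat) \<Rightarrow> (nat \<Rightarrow> nat) \<Rightarrow> bool" where
  "Sle p q \<longleftrightarrow> (\<forall>i. p i = 0 \<or> p i = q i)"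

definition Srank :: "nat \<Rightarrow> (nat \<Rightarrow> nat) \<Rightarrow> nat" where
  "Srank n p = card {i. i < n \<and> p i \<noteq> 0}"

definition kmeet :: "(nat \<Rightarrow> nat) \<Rightarrow> (nat \<Rightarrow> nat) \<Rightarrow> (nat \<Rightarrow> nat)" where
  "kmeet p q = (\<lambda>i. if p i = q i then p i else 0)"

definition kjoin :: "(nat \<Rightarrow> nat) \<Rightarrow> (nat \<Rightarrow> nat) \<Rightarrow> (nat \<Rightarrow> nat)" where
  "kjoin p q = (\<lambda>i. if p i = 0 then q i else if q i = 0 then p i
                    else if p i = q i then p i else 0)"

definition k_submodular :: "nat \<Rightarrow> nat \<Rightarrow> ((nat \<Rightarrow> nat) \<Rightarrow> ereal) \<Rightarrow> bool" where
  "k_submodular k n f \<longleftrightarrow>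
     (\<forall>p\<in>Skn k n. \<forall>q\<in>Skn k n. f p + f q \<ge> f (kmeet p q) + f (kjoin p q))"

definition glb :: "'a set \<Rightarrow> ('a \<Rightarrow> 'a \<Rightarrow> bool) \<Rightarrow> 'a \<Rightarrow> 'a \<Rightarrow> 'a" where
  "glb L le p q = (THE m. m \<in> L \<and> le m p \<and> le m q \<and>
                      (\<forall>x\<in>L. le x p \<and> le x q \<longrightarrow> le x m))"

definition covers :: "'a set \<Rightarrow> ('a \<Rightarrow> 'a \<Rightarrow> bool) \<Rightarrow> 'a \<Rightarrow> 'a \<Rightarrow> bool" where
  "covers L le a b \<longleftrightarrow> a \<in> L \<and> b \<in> L \<and> le a b \<and> a \<noteq> b \<and>
     \<not> (\<exists>c\<in>L. le a c \<and> le c b \<and> c \<noteq> a \<and> c \<noteq> b)"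

definition cg_path :: "'a set \<Rightarrow> ('a \<Rightarrow> 'a \<Rightarrow> bool) \<Rightarrow> 'a list \<Rightarrow> bool" where
  "cg_path L le xs \<longleftrightarrow> xs \<noteq> [] \<and> set xs \<subseteq> L \<and>
     (\<forall>i. Suc i < length xs \<longrightarrow>
        covers L le (xs ! i) (xs ! Suc i) \<or> covers L le (xs ! Suc i) (xs ! i))"

definition cg_dist :: "'a set \<Rightarrow> ('a \<Rightarrow> 'a \<Rightarrow> bool) \<Rightarrow> 'a \<Rightarrow> 'a \<Rightarrow> nat" where
  "cg_dist L le p q = (LEAST m. \<exists>xs. cg_path L le xs \<and> hd xs = p \<and> last xs = q
                                      \<and> length xs = Suc m)"

definition interval :: "'a set \<Rightarrow> ('a \<Rightarrow> 'a \<Rightarrow> bool) \<Rightarrow> 'a \<Rightarrow> 'a \<Rightarrow> 'a set" where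
  "interval L le p q = {u. \<exists>xs. cg_path L le xs \<and> hd xs = p \<and> last xs = q \<and>
        length xs = Suc (cg_dist L le p q) \<and> u \<in> set xs}"

definition rvec :: "'a set \<Rightarrow> ('a \<Rightarrow> 'a \<Rightarrow> bool) \<Rightarrow> ('a \<Rightarrow> nat) \<Rightarrow> 'a \<Rightarrow> 'a \<Rightarrow> 'a \<Rightarrow> real \<times> real"
  where
  "rvec L le r p q u =
     (real (r (glb L le u p)) - real (r (glb L le p q)),
      real (r (glb L le u q)) - real (r (glb L le p q)))"

definition convI :: "'a set \<Rightarrow> ('a \<Rightarrow> 'a \<Rightarrow> bool) \<Rightarrow> ('a \<Rightarrow> nat) \<Rightarrow> 'a \<Rightarrow> 'a \<Rightarrow> (real \<times> real) set"
  where
  "convI L le r p q = convex hull (rvec L le r p q ` interval L le p q)"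

definition Eset :: "'a set \<Rightarrow> ('a \<Rightarrow> 'a \<Rightarrow> bool) \<Rightarrow> ('a \<Rightarrow> nat) \<Rightarrow> 'a \<Rightarrow> 'a \<Rightarrow> 'a set" where
  "Eset L le r p q = {u \<in> interval L le p q.
      rvec L le r p q u extreme_point_of convI L le r p q \<and>
      \<not> (\<exists>z\<in>convI L le r p q. z \<noteq> rvec L le r p q u \<and>
            fst (rvec L le r p q u) \<le> fst z \<and> snd (rvec L le r p q u) \<le> snd z)}"

definition Ccone :: "'a set \<Rightarrow> ('a \<Rightarrow> 'a \<Rightarrow> bool) \<Rightarrow> ('a \<Rightarrow> nat) \<Rightarrow> 'a \<Rightarrow> 'a \<Rightarrow> 'a \<Rightarrow> (real \<times> real) set"
  where
  "Ccone L le r p q u = {w. fst w \<ge> 0 \<and> snd w \<ge> 0 \<and>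
      inner w (rvec L le r p q u) = (SUP z\<in>convI L le r p q. inner w z)}"

definition sector :: "real \<Rightarrow> real \<Rightarrow> (real \<times> real) set" where
  "sector \<alpha> \<beta> = {(x, y). x \<ge> 0 \<and> y \<ge> 0 \<and> y * cos \<alpha> \<le> x * sin \<alpha> \<and> y * cos \<beta> \<ge> x * sin \<beta>}"

definition cone_coef :: "(real \<times> real) set \<Rightarrow> real" where
  "cone_coef C = (case (THE (\<alpha>, \<beta>). 0 \<le> \<beta> \<and> \<beta> \<le> \<alpha> \<and> \<alpha> \<le> pi / 2 \<and> C = sector \<alpha> \<beta>) of
     (\<alpha>, \<beta>) \<Rightarrow> sin \<alpha> / (sin \<alpha> + cos \<alpha>) - sin \<beta> / (sin \<beta> + cos \<beta>))"

definition submodular_on :: "'a set \<Rightarrow> ('a \<Rightarrow> 'a \<Rightarrow> bool) \<Rightarrow> ('a \<Rightarrow> nat) \<Rightarrow> ('a \<Rightarrow> ereal) \<Rightarrow> bool"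
  where
  "submodular_on L le r f \<longleftrightarrow>
     (\<forall>p\<in>L. \<forall>q\<in>L. f p + f q \<ge> f (glb L le p q) +
        (\<Sum>u\<in>{u \<in> Eset L le r p q. cone_coef (Ccone L le r p q u) \<noteq> 0}.
            ereal (cone_coef (Ccone L le r p q u)) * f u))"

end

theory Submission
  imports Defs
begin

lemma sector_mem_angle:
  assumes "0 \<le> \<beta>" "\<beta> \<le> \<alpha>" "\<alpha> \<le> pi/2" "0 \<le> \<theta>" "\<theta> \<le> pi/2"
  shows "(cos \<theta>, sin \<theta>) \<in> sector \<alpha> \<beta> \<longleftrightarrow> \<beta> \<le> \<theta> \<and> \<theta> \<le> \<alpha>"
proof -
  have c: "cos \<theta> \<ge> 0" "sin \<theta> \<ge> 0" using assms
    by (auto intro!: cos_ge_zero sin_ge_zero)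
  have e1: "sin \<theta> * cos \<alpha> \<le> cos \<theta> * sin \<alpha> \<longleftrightarrow> sin (\<theta> - \<alpha>) \<le> 0"
    by (simp add: sin_diff mult.commute)
  have e2: "sin \<theta> * cos \<beta> \<ge> cos \<theta> * sin \<beta> \<longleftrightarrow> sin (\<theta> - \<beta>) \<ge> 0"
    by (simp add: sin_diff mult.commute)
  have s1: "sin (\<theta> - \<alpha>) \<le> 0 \<longleftrightarrow> \<theta> \<le> \<alpha>"
  proof
    assume "sin (\<theta> - \<alpha>) \<le> 0"
    show "\<theta> \<le> \<alpha>"
    proof (rule ccontr)
      assume "\<not> \<theta> \<le> \<alpha>"
      then have "sin (\<theta> - \<alpha>) > 0" using assms by (intro sin_gt_zero) auto
      then show False using \<open>sin (\<theta> - \<alpha>) \<le> 0\<close> by simp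
    qed
  next
    assume "\<theta> \<le> \<alpha>"
    then have "sin (\<alpha> - \<theta>) \<ge> 0" using assms by (intro sin_ge_zero) auto
    then show "sin (\<theta> - \<alpha>) \<le> 0" by (metis minus_diff_eq neg_0_le_iff_le sin_minus)
  qed
  have s2: "sin (\<theta> - \<beta>) \<ge> 0 \<longleftrightarrow> \<beta> \<le> \<theta>"
  proof
    assume "sin (\<theta> - \<beta>) \<ge> 0"
    show "\<beta> \<le> \<theta>"
    proof (rule ccontr)
      assume "\<not> \<beta> \<le> \<theta>"
      then have "sin (\<beta> - \<theta>) > 0" using assms by (intro sin_gt_zero) auto
      then show False using \<open>sin (\<theta> - \<beta>) \<ge> 0\<close> by (metis minus_diff_eq neg_0_less_iff_less not_le sin_minus)
    qed
  next
    assume "\<beta> \<le> \<theta>"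
    then show "sin (\<theta> - \<beta>) \<ge> 0" using assms by (intro sin_ge_zero) auto
  qed
  show ?thesis unfolding sector_def using c e1 e2 s1 s2 by auto
qed

lemma sector_unique:
  assumes "0 \<le> \<beta>" "\<beta> \<le> \<alpha>" "\<alpha> \<le> pi/2" "0 \<le> \<beta>'" "\<beta>' \<le> \<alpha>'" "\<alpha>' \<le> pi/2"
    and "sector \<alpha> \<beta> = sector \<alpha>' \<beta>'"
  shows "\<alpha> = \<alpha>' \<and> \<beta> = \<beta>'"
proof -
  have m: "\<And>\<theta>. 0 \<le> \<theta> \<Longrightarrow> \<theta> \<le> pi/2 \<Longrightarrow> (\<beta> \<le> \<theta> \<and> \<theta> \<le> \<alpha>) = (\<beta>' \<le> \<theta> \<and> \<theta> \<le> \<alpha>')"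
    using sector_mem_angle[of \<beta> \<alpha>] sector_mem_angle[of \<beta>' \<alpha>'] assms by metis
  from m[of \<alpha>] m[of \<alpha>'] m[of \<beta>] m[of \<beta>'] assms show ?thesis by auto
qed

lemma cone_coef_sector:
  assumes "0 \<le> \<beta>" "\<beta> \<le> \<alpha>" "\<alpha> \<le> pi/2"
  shows "cone_coef (sector \<alpha> \<beta>) = sin \<alpha> / (sin \<alpha> + cos \<alpha>) - sin \<beta> / (sin \<beta> + cos \<beta>)"
proof -
  have "(THE (a, b). 0 \<le> b \<and> b \<le> a \<and> a \<le> pi / 2 \<and> sector \<alpha> \<beta> = sector a b) = (\<alpha>, \<beta>)"
    apply (rule the_equality)
    using assms sector_unique[of \<beta> \<alpha> ] by auto
  then show ?thesis unfolding cone_coef_def by simp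
qed

lemma coef_A: "cone_coef (sector (pi/4) 0) = 1/2"
proof -
  have "cone_coef (sector (pi/4) 0) = sin (pi/4) / (sin (pi/4) + cos (pi/4)) - sin 0 / (sin 0 + cos 0)"
    by (rule cone_coef_sector) (auto simp: pi_ge_zero)
  then show ?thesis by (simp add: sin_45 cos_45)
qed

lemma coef_B: "cone_coef (sector (pi/2) (pi/4)) = 1/2"
proof -
  have "cone_coef (sector (pi/2) (pi/4)) = sin (pi/2) / (sin (pi/2) + cos (pi/2)) - sin (pi/4) / (sin (pi/4) + cos (pi/4))"
    by (rule cone_coef_sector) (auto simp: pi_ge_zero)
  then show ?thesis by (simp add: sin_45 cos_45)
qed

lemma coef_C: "cone_coef (sector (pi/2) 0) = 1"
proof -
  have "cone_coef (sector (pi/2) 0) = sin (pi/2) / (sin (pi/2) + cos (pi/2)) - sin 0 / (sin 0 + cos 0)"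
    by (rule cone_coef_sector) (auto simp: pi_ge_zero)
  then show ?thesis by simp
qed

lemma sectA: "{w::real\<times>real. fst w \<ge> 0 \<and> snd w \<ge> 0 \<and> snd w \<le> fst w} = sector (pi/4) 0"
  unfolding sector_def by (auto simp: sin_45 cos_45)
lemma sectB: "{w::real\<times>real. fst w \<ge> 0 \<and> snd w \<ge> 0 \<and> fst w \<le> snd w} = sector (pi/2) (pi/4)"
  unfolding sector_def by (auto simp: sin_45 cos_45)
lemma sectC: "{w::real\<times>real. fst w \<ge> 0 \<and> snd w \<ge> 0} = sector (pi/2) 0"
  unfolding sector_def by auto

locale geo =
  fixes V :: "(real \<times> real) set" and a1 b1 c :: real
  assumes hV: "V \<subseteq> {z. fst z \<le> a1 \<and> snd z \<le> b1 \<and> fst z + snd z \<le> c}"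
    and P1V: "(a1, c - a1) \<in> V" and P2V: "(c - b1, b1) \<in> V" and abc: "a1 + b1 \<ge> c"
begin

definition "PP = {z::real\<times>real. fst z \<le> a1 \<and> snd z \<le> b1 \<and> fst z + snd z \<le> c}"

lemma convex_PP: "convex PP"
  unfolding convex_def PP_def
proof (intro ballI allI impI, simp only: mem_Collect_eq, elim conjE)
  fix x y :: "real \<times> real" and u v :: real
  assume h: "fst x \<le> a1" "snd x \<le> b1" "fst x + snd x \<le> c" "fst y \<le> a1" "snd y \<le> b1"
     "fst y + snd y \<le> c" "0 \<le> u" "0 \<le> v" "u + v = 1"
  have "u * fst x + v * fst y \<le> u * a1 + v * a1" using h by (intro add_mono mult_left_mono) auto
  also have "\<dots> = a1" using h(9) by (metis distrib_right mult_1)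
  finally have 1: "u * fst x + v * fst y \<le> a1" .
  have "u * snd x + v * snd y \<le> u * b1 + v * b1" using h by (intro add_mono mult_left_mono) auto
  also have "\<dots> = b1" using h(9) by (metis distrib_right mult_1)
  finally have 2: "u * snd x + v * snd y \<le> b1" .
  have "u * (fst x + snd x) + v * (fst y + snd y) \<le> u * c + v * c" using h by (intro add_mono mult_left_mono) auto
  also have "\<dots> = c" using h(9) by (metis distrib_right mult_1)
  finally have 3: "u * (fst x + snd x) + v * (fst y + snd y) \<le> c" .
  show "fst (u *\<^sub>R x + v *\<^sub>R y) \<le> a1 \<and> snd (u *\<^sub>R x + v *\<^sub>R y) \<le> b1 \<and>
      fst (u *\<^sub>R x + v *\<^sub>R y) + snd (u *\<^sub>R x + v *\<^sub>R y) \<le> c"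
    using 1 2 3 by (simp add: algebra_simps)
qed

lemma K_sub: "convex hull V \<subseteq> PP"
  using hV convex_PP by (intro hull_minimal) (auto simp: PP_def)

lemma P1K: "(a1, c - a1) \<in> convex hull V" using P1V hull_inc by metis
lemma P2K: "(c - b1, b1) \<in> convex hull V" using P2V hull_inc by metis

lemma unique_max_extreme:
  assumes "z \<in> S" "S \<subseteq> PP" and lin: "\<And>y. y \<in> PP \<Longrightarrow> lx * fst y + ly * snd y \<le> M"
    and eq: "\<And>y. y \<in> PP \<Longrightarrow> lx * fst y + ly * snd y = M \<Longrightarrow> y = z"
    and zM: "lx * fst z + ly * snd z = M"
  shows "z extreme_point_of S"
  unfolding extreme_point_of_def
proof (intro conjI ballI)
  show "z \<in> S" by fact
  fix a b assume ab: "a \<in> S" "b \<in> S"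
  show "z \<notin> open_segment a b"
  proof
    assume "z \<in> open_segment a b"
    then obtain u where u: "a \<noteq> b" "0 < u" "u < 1" "z = (1 - u) *\<^sub>R a + u *\<^sub>R b"
      by (auto simp: in_segment)
    have la: "lx * fst a + ly * snd a \<le> M" and lb: "lx * fst b + ly * snd b \<le> M"
      using ab assms(2) lin by auto
    have zz: "fst z = (1-u) * fst a + u * fst b" "snd z = (1-u) * snd a + u * snd b"
      using u(4) by simp_all
    have "lx * fst z + ly * snd z = (1-u) * (lx * fst a + ly * snd a) + u * (lx * fst b + ly * snd b)"
      unfolding zz by (simp add: algebra_simps)
    then have "(1-u) * (lx * fst a + ly * snd a) + u * (lx * fst b + ly * snd b) = M" using zM by simp
    then have e0: "(1-u) * (M - (lx * fst a + ly * snd a)) + u * (M - (lx * fst b + ly * snd b)) = 0"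
      by (simp add: algebra_simps)
    have n1: "(1-u) * (M - (lx * fst a + ly * snd a)) \<ge> 0" using la u(3) by simp
    have n2: "u * (M - (lx * fst b + ly * snd b)) \<ge> 0" using lb u(2) by simp
    have "(1-u) * (M - (lx * fst a + ly * snd a)) = 0" "u * (M - (lx * fst b + ly * snd b)) = 0"
      using e0 n1 n2 by linarith+
    then have "lx * fst a + ly * snd a = M \<and> lx * fst b + ly * snd b = M"
      using u(2,3) by simp
    then have "a = z" "b = z" using eq[of a] eq[of b] ab assms(2) by auto
    then show False using u(1) by simp
  qed
qed

lemma P1_ext: "(a1, c - a1) extreme_point_of convex hull V"
  by (rule unique_max_extreme[where lx=2 and ly=1 and M="a1 + c"])
     (use P1K K_sub in \<open>auto simp: PP_def\<close>)

lemma P2_ext: "(c - b1, b1) extreme_point_of convex hull V"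
  by (rule unique_max_extreme[where lx=1 and ly=2 and M="b1 + c"])
     (use P2K K_sub in \<open>auto simp: PP_def\<close>)

definition "good z \<longleftrightarrow> z extreme_point_of convex hull V \<and>
   \<not> (\<exists>w\<in>(convex hull V). w \<noteq> z \<and> fst z \<le> fst w \<and> snd z \<le> snd w)"

lemma good_iff: assumes "z \<in> convex hull V" shows "good z \<longleftrightarrow> z = (a1, c - a1) \<or> z = (c - b1, b1)"
proof
  assume "z = (a1, c - a1) \<or> z = (c - b1, b1)"
  then show "good z"
  proof
    assume z: "z = (a1, c - a1)"
    show "good z" unfolding good_def z using P1_ext K_sub by (auto simp: PP_def)
  next
    assume z: "z = (c - b1, b1)"
    show "good z" unfolding good_def z using P2_ext K_sub by (auto simp: PP_def)
  qed
next
  assume g: "good z"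
  obtain x y where z: "z = (x, y)" by fastforce
  have zP: "x \<le> a1" "y \<le> b1" "x + y \<le> c" using assms K_sub z by (auto simp: PP_def)
  show "z = (a1, c - a1) \<or> z = (c - b1, b1)"
  proof (rule ccontr)
    assume ne: "\<not> ?thesis"
    have "y > c - a1"
    proof (rule ccontr)
      assume "\<not> y > c - a1"
      then show False using g ne P1K zP unfolding good_def z by auto
    qed
    moreover have "x > c - b1"
    proof (rule ccontr)
      assume "\<not> x > c - b1"
      then show False using g ne P2K zP unfolding good_def z by auto
    qed
    ultimately have Dp: "a1 + b1 - c > 0" using zP by linarith
    define lam where "lam = (x - c + b1) / (a1 + b1 - c)"
    have l0: "0 < lam" "lam \<le> 1" unfolding lam_def using Dp zP \<open>x > c - b1\<close>
      by (auto simp: field_simps)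
    define w where "w = lam *\<^sub>R (a1, c - a1) + (1 - lam) *\<^sub>R (c - b1, b1)"
    have wK: "w \<in> convex hull V" unfolding w_def
      by (rule convexD[OF convex_convex_hull P1K P2K]) (use l0 in auto)
    have key: "lam*a1 + lam*b1 - lam*c = x - c + b1"
    proof -
      have "lam * (a1 + b1 - c) = x - c + b1" unfolding lam_def using Dp by simp
      then show ?thesis by (simp add: algebra_simps)
    qed
    have e: "lam*(c-b1) = lam*c - lam*b1" by (simp add: algebra_simps)
    have "fst w = lam*a1 + (c - b1) - lam*(c-b1)" unfolding w_def by (simp add: algebra_simps)
    then have wx: "fst w = x" using e key by linarith
    have "snd w = lam*(c - a1) + b1 - lam * b1" unfolding w_def by (simp add: algebra_simps)
    moreover have "lam*(c-a1) = lam*c - lam*a1" by (simp add: algebra_simps)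
    ultimately have wy: "snd w = c - x" using key by linarith
    show False
    proof (cases "w = z")
      case False
      then show False using g wK wx wy zP unfolding good_def z by auto
    next
      case True
      have "lam < 1"
      proof (rule ccontr)
        assume "\<not> lam < 1"
        then have "lam = 1" using l0 by simp
        then have "w = (a1, c - a1)" unfolding w_def by simp
        then show False using True ne by simp
      qed
      have "(a1, c - a1) \<noteq> (c - b1, b1)" using Dp by auto
      then have "z \<in> open_segment (c - b1, b1) (a1, c - a1)"
        using True l0 \<open>lam < 1\<close> unfolding in_segment w_def
        by (intro conjI exI[of _ lam]) (auto simp: algebra_simps)
      then show False using g P1K P2K unfolding good_def extreme_point_of_def by blast
    qed
  qed
qed

lemma sup_iff:
  assumes "fst w \<ge> 0" "snd w \<ge> 0" "z \<in> convex hull V"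
  shows "inner w z = (SUP y\<in>(convex hull V). inner w y) \<longleftrightarrow> (\<forall>y\<in>(convex hull V). inner w y \<le> inner w z)"
proof -
  have bdd: "bdd_above ((\<lambda>y. inner w y) ` (convex hull V))"
  proof (rule bdd_aboveI2)
    fix y assume "y \<in> convex hull V"
    then have "fst y \<le> a1" "snd y \<le> b1" using K_sub by (auto simp: PP_def)
    then show "inner w y \<le> fst w * a1 + snd w * b1"
      using assms by (cases w, cases y) (auto intro!: add_mono mult_left_mono)
  qed
  show ?thesis
  proof
    assume "inner w z = (SUP y\<in>(convex hull V). inner w y)"
    then show "\<forall>y\<in>(convex hull V). inner w y \<le> inner w z"
      using cSUP_upper[OF _ bdd] by auto
  next
    assume h: "\<forall>y\<in>(convex hull V). inner w y \<le> inner w z"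
    show "inner w z = (SUP y\<in>(convex hull V). inner w y)"
      apply (rule antisym)
      using cSUP_upper[OF assms(3) bdd] apply simp
      using h assms(3) by (intro cSUP_least) auto
  qed
qed

lemma cone1: "{w. fst w \<ge> 0 \<and> snd w \<ge> 0 \<and> inner w (a1, c - a1) = (SUP y\<in>(convex hull V). inner w y)}
   = (if a1 + b1 > c then {w. fst w \<ge> 0 \<and> snd w \<ge> 0 \<and> snd w \<le> fst w} else {w. fst w \<ge> 0 \<and> snd w \<ge> 0})"
proof -
  have "fst w \<ge> 0 \<and> snd w \<ge> 0 \<and> inner w (a1, c - a1) = (SUP y\<in>(convex hull V). inner w y) \<longleftrightarrow>
     fst w \<ge> 0 \<and> snd w \<ge> 0 \<and> (a1 + b1 > c \<longrightarrow> snd w \<le> fst w)" for w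
  proof (cases "fst w \<ge> 0 \<and> snd w \<ge> 0")
    case True
    obtain w1 w2 where w: "w = (w1, w2)" by fastforce
    have "(\<forall>y\<in>(convex hull V). inner w y \<le> inner w (a1, c - a1)) \<longleftrightarrow> (a1 + b1 > c \<longrightarrow> w2 \<le> w1)"
    proof
      assume h: "\<forall>y\<in>(convex hull V). inner w y \<le> inner w (a1, c - a1)"
      have "w1 * (c - b1) + w2 * b1 \<le> w1 * a1 + w2 * (c - a1)" using h P2K w by auto
      then have "w2 * (a1 + b1 - c) \<le> w1 * (a1 + b1 - c)" by (simp add: algebra_simps)
      then show "a1 + b1 > c \<longrightarrow> w2 \<le> w1" by (simp add: mult_le_cancel_right)
    next
      assume h: "a1 + b1 > c \<longrightarrow> w2 \<le> w1"
      show "\<forall>y\<in>(convex hull V). inner w y \<le> inner w (a1, c - a1)"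
      proof
        fix y assume "y \<in> convex hull V"
        then obtain x1 x2 where y: "y = (x1, x2)" "x1 \<le> a1" "x2 \<le> b1" "x1 + x2 \<le> c"
          using K_sub by (cases y) (auto simp: PP_def)
        show "inner w y \<le> inner w (a1, c - a1)"
        proof (cases "a1 + b1 > c")
          case True
          then have "w2 \<le> w1" using h by simp
          have "w1 * x1 + w2 * x2 = w2 * (x1 + x2) + (w1 - w2) * x1" by (simp add: algebra_simps)
          also have "\<dots> \<le> w2 * c + (w1 - w2) * a1"
            using \<open>w2 \<le> w1\<close> True y w \<open>fst w \<ge> 0 \<and> snd w \<ge> 0\<close>
            by (intro add_mono mult_left_mono) auto
          also have "\<dots> = w1 * a1 + w2 * (c - a1)" by (simp add: algebra_simps)
          finally show ?thesis using y w by simp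
        next
          case False
          then have "c - a1 = b1" using abc by simp
          have "w1 * x1 + w2 * x2 \<le> w1 * a1 + w2 * b1"
            using y w True by (intro add_mono mult_left_mono) auto
          then show ?thesis using y w \<open>c - a1 = b1\<close> by simp
        qed
      qed
    qed
    then show ?thesis using sup_iff[of w, OF _ _ P1K] True w by auto
  next
    case False then show ?thesis by auto
  qed
  then show ?thesis by auto
qed

lemma cone2: "{w. fst w \<ge> 0 \<and> snd w \<ge> 0 \<and> inner w (c - b1, b1) = (SUP y\<in>(convex hull V). inner w y)}
   = (if a1 + b1 > c then {w. fst w \<ge> 0 \<and> snd w \<ge> 0 \<and> fst w \<le> snd w} else {w. fst w \<ge> 0 \<and> snd w \<ge> 0})"
proof -
  have "fst w \<ge> 0 \<and> snd w \<ge> 0 \<and> inner w (c - b1, b1) = (SUP y\<in>(convex hull V). inner w y) \<longleftrightarrow>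
     fst w \<ge> 0 \<and> snd w \<ge> 0 \<and> (a1 + b1 > c \<longrightarrow> fst w \<le> snd w)" for w
  proof (cases "fst w \<ge> 0 \<and> snd w \<ge> 0")
    case True
    obtain w1 w2 where w: "w = (w1, w2)" by fastforce
    have "(\<forall>y\<in>(convex hull V). inner w y \<le> inner w (c - b1, b1)) \<longleftrightarrow> (a1 + b1 > c \<longrightarrow> w1 \<le> w2)"
    proof
      assume h: "\<forall>y\<in>(convex hull V). inner w y \<le> inner w (c - b1, b1)"
      have "w1 * a1 + w2 * (c - a1) \<le> w1 * (c - b1) + w2 * b1" using h P1K w by auto
      then have "w1 * (a1 + b1 - c) \<le> w2 * (a1 + b1 - c)" by (simp add: algebra_simps)
      then show "a1 + b1 > c \<longrightarrow> w1 \<le> w2" by (simp add: mult_le_cancel_right)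
    next
      assume h: "a1 + b1 > c \<longrightarrow> w1 \<le> w2"
      show "\<forall>y\<in>(convex hull V). inner w y \<le> inner w (c - b1, b1)"
      proof
        fix y assume "y \<in> convex hull V"
        then obtain x1 x2 where y: "y = (x1, x2)" "x1 \<le> a1" "x2 \<le> b1" "x1 + x2 \<le> c"
          using K_sub by (cases y) (auto simp: PP_def)
        show "inner w y \<le> inner w (c - b1, b1)"
        proof (cases "a1 + b1 > c")
          case True
          then have "w1 \<le> w2" using h by simp
          have "w1 * x1 + w2 * x2 = w1 * (x1 + x2) + (w2 - w1) * x2" by (simp add: algebra_simps)
          also have "\<dots> \<le> w1 * c + (w2 - w1) * b1"
            using \<open>w1 \<le> w2\<close> True y w \<open>fst w \<ge> 0 \<and> snd w \<ge> 0\<close>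
            by (intro add_mono mult_left_mono) auto
          also have "\<dots> = w1 * (c - b1) + w2 * b1" by (simp add: algebra_simps)
          finally show ?thesis using y w by simp
        next
          case False
          then have "c - b1 = a1" using abc by simp
          have "w1 * x1 + w2 * x2 \<le> w1 * a1 + w2 * b1"
            using y w True by (intro add_mono mult_left_mono) auto
          then show ?thesis using y w \<open>c - b1 = a1\<close> by simp
        qed
      qed
    qed
    then show ?thesis using sup_iff[of w, OF _ _ P2K] True w by auto
  next
    case False then show ?thesis by auto
  qed
  then show ?thesis by auto
qed

end

definition delta :: "nat \<Rightarrow> nat \<Rightarrow> nat" where
  "delta a b = (if a = b then 0 else if a = 0 \<or> b = 0 then 1 else 2)"

definition dd :: "nat \<Rightarrow> (nat \<Rightarrow> nat) \<Rightarrow> (nat \<Rightarrow> nat) \<Rightarrow> nat" where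
  "dd n x y = (\<Sum>i<n. delta (x i) (y i))"

lemma delta_sym: "delta a b = delta b a" by (auto simp: delta_def)
lemma delta_tri: "delta a c \<le> delta a b + delta b c" by (auto simp: delta_def)

lemma dd_sym: "dd n x y = dd n y x" unfolding dd_def by (simp add: delta_sym)
lemma dd_self[simp]: "dd n x x = 0" unfolding dd_def by (simp add: delta_def)
lemma dd_tri: "dd n x z \<le> dd n x y + dd n y z"
  unfolding dd_def sum.distrib[symmetric] by (intro sum_mono delta_tri)

lemma dd_zero: assumes "x \<in> Skn k n" "y \<in> Skn k n" "dd n x y = 0" shows "x = y"
proof
  fix i show "x i = y i"
  proof (cases "i < n")
    case True
    then have "delta (x i) (y i) = 0" using assms(3) unfolding dd_def by simp
    then show ?thesis by (auto simp: delta_def split: if_splits)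
  next
    case False then show ?thesis using assms(1,2) by (auto simp: Skn_def)
  qed
qed

lemma dd_upd: assumes "i < n"
  shows "dd n (x(i:=v)) y + delta (x i) (y i) = dd n x y + delta v (y i)"
proof -
  have fin: "finite {..<n}" by simp
  have "dd n (x(i:=v)) y = delta v (y i) + (\<Sum>j\<in>{..<n}-{i}. delta ((x(i:=v)) j) (y j))"
    unfolding dd_def using assms by (subst sum.remove[OF fin, of i]) auto
  moreover have "dd n x y = delta (x i) (y i) + (\<Sum>j\<in>{..<n}-{i}. delta (x j) (y j))"
    unfolding dd_def using assms by (subst sum.remove[OF fin, of i]) auto
  moreover have "(\<Sum>j\<in>{..<n}-{i}. delta ((x(i:=v)) j) (y j)) = (\<Sum>j\<in>{..<n}-{i}. delta (x j) (y j))"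
    by (intro sum.cong) auto
  ultimately show ?thesis by simp
qed

lemma Sle_antisym: assumes "Sle p q" "Sle q p" shows "p = q"
proof
  fix i show "p i = q i" using assms unfolding Sle_def by (metis (full_types))
qed

lemma cover_D: assumes "covers (Skn k n) Sle a b"
  shows "\<exists>i<n. a i = 0 \<and> b i \<noteq> 0 \<and> b = a(i := b i)"
proof -
  have a: "a \<in> Skn k n" "b \<in> Skn k n" "Sle a b" "a \<noteq> b"
    and nc: "\<not> (\<exists>c\<in>Skn k n. Sle a c \<and> Sle c b \<and> c \<noteq> a \<and> c \<noteq> b)"
    using assms unfolding covers_def by auto
  obtain i where i: "a i \<noteq> b i" using a(4) by auto
  have ai: "a i = 0" using a(3) i unfolding Sle_def by blast
  have bi: "b i \<noteq> 0" using ai i by simp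
  have "i < n"
  proof (rule ccontr)
    assume "\<not> i < n" then have "b i = 0" using a(2) unfolding Skn_def by simp
    then show False using bi by simp
  qed
  define c where "c = a(i := b i)"
  have cS: "c \<in> Skn k n" using a(1,2) \<open>i < n\<close> unfolding c_def Skn_def by auto
  have "Sle a c" unfolding c_def Sle_def using ai by auto
  moreover have "Sle c b" using a(3) unfolding c_def Sle_def by auto
  moreover have "c \<noteq> a"
  proof
    assume "c = a" then have "c i = a i" by simp
    then show False unfolding c_def using bi ai by simp
  qed
  ultimately have "c = b" using nc cS by blast
  then have "b = a(i := b i)" unfolding c_def by simp
  then show ?thesis using ai bi \<open>i < n\<close> by blast
qed

lemma cover_I: assumes "a \<in> Skn k n" "i < n" "a i = 0" "v \<noteq> 0" "v \<le> k"
  shows "covers (Skn k n) Sle a (a(i:=v))"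
  unfolding covers_def
proof (intro conjI)
  show "a \<in> Skn k n" by fact
  show "a(i:=v) \<in> Skn k n" using assms unfolding Skn_def by auto
  show "Sle a (a(i:=v))" unfolding Sle_def using assms by auto
  show "a \<noteq> a(i:=v)" using assms by (metis fun_upd_same)
  show "\<not> (\<exists>c\<in>Skn k n. Sle a c \<and> Sle c (a(i:=v)) \<and> c \<noteq> a \<and> c \<noteq> a(i:=v))"
  proof
    assume "\<exists>c\<in>Skn k n. Sle a c \<and> Sle c (a(i:=v)) \<and> c \<noteq> a \<and> c \<noteq> a(i:=v)"
    then obtain c where c: "Sle a c" "Sle c (a(i:=v))" "c \<noteq> a" "c \<noteq> a(i:=v)" by blast
    have cj: "\<And>j. j \<noteq> i \<Longrightarrow> c j = a j" using c(1,2) unfolding Sle_def by (metis fun_upd_other)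
    have "c i = 0 \<or> c i = v" using c(2) unfolding Sle_def by (metis fun_upd_same)
    then show False
    proof
      assume "c i = 0" then have "c = a" using cj assms(3) by (intro ext) (metis)
      then show False using c(3) by simp
    next
      assume "c i = v" then have "c = a(i:=v)" using cj by (auto simp: fun_eq_iff)
      then show False using c(4) by simp
    qed
  qed
qed

lemma dd_cover: assumes "covers (Skn k n) Sle a b" shows "dd n a b = 1"
proof -
  obtain i where i: "i < n" "a i = 0" "b i \<noteq> 0" "b = a(i := b i)" using cover_D[OF assms] by blast
  have "dd n (a(i := b i)) b + delta (a i) (b i) = dd n a b + delta (b i) (b i)" by (rule dd_upd[OF i(1)])
  then have "dd n b b + 1 = dd n a b" using i by (simp add: delta_def)
  then show ?thesis by simp
qed

lemma dd_cover': "covers (Skn k n) Sle a b \<or> covers (Skn k n) Sle b a \<Longrightarrow> dd n a b = 1"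
  using dd_cover dd_sym by metis

lemma path_dd: assumes "cg_path (Skn k n) Sle xs"
  shows "i \<le> j \<Longrightarrow> j < length xs \<Longrightarrow> dd n (xs!i) (xs!j) \<le> j - i"
proof (induction j)
  case 0 then show ?case by simp
next
  case (Suc j)
  show ?case
  proof (cases "i = Suc j")
    case True then show ?thesis by simp
  next
    case False
    then have "i \<le> j" using Suc.prems by simp
    have "dd n (xs!i) (xs!j) \<le> j - i" using Suc.IH \<open>i \<le> j\<close> Suc.prems by simp
    moreover have "dd n (xs!j) (xs!Suc j) = 1"
      using assms Suc.prems(2) unfolding cg_path_def by (intro dd_cover') blast
    ultimately show ?thesis using dd_tri[of n "xs!i" "xs!Suc j" "xs!j"] \<open>i \<le> j\<close> by linarith
  qed
qed

lemma cover_Skn: "covers (Skn k n) Sle a b \<Longrightarrow> a \<in> Skn k n \<and> b \<in> Skn k n"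
  unfolding covers_def by simp

lemma step_ex: assumes "x \<in> Skn k n" "y \<in> Skn k n" "x \<noteq> y"
  shows "\<exists>x'\<in>Skn k n. (covers (Skn k n) Sle x x' \<or> covers (Skn k n) Sle x' x) \<and> dd n x' y + 1 = dd n x y"
proof -
  obtain i where i: "x i \<noteq> y i" using assms(3) by auto
  have "i < n"
  proof (rule ccontr)
    assume "\<not> i < n" then have "x i = 0" "y i = 0" using assms(1,2) unfolding Skn_def by simp_all
    then show False using i by simp
  qed
  show ?thesis
  proof (cases "x i = 0")
    case True
    have yk: "y i \<le> k" using assms(2) \<open>i < n\<close> unfolding Skn_def by auto
    have yi: "y i \<noteq> 0" using True i by simp
    have cv: "covers (Skn k n) Sle x (x(i := y i))" by (rule cover_I[OF assms(1) \<open>i < n\<close> True yi yk])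
    have "dd n (x(i := y i)) y + delta (x i) (y i) = dd n x y + delta (y i) (y i)" by (rule dd_upd[OF \<open>i<n\<close>])
    then have "dd n (x(i := y i)) y + 1 = dd n x y" using True i by (simp add: delta_def)
    moreover have "x(i := y i) \<in> Skn k n" using cover_Skn[OF cv] by simp
    ultimately show ?thesis using cv by blast
  next
    case False
    define x' where "x' = x(i := 0)"
    have x'S: "x' \<in> Skn k n" using assms(1) unfolding x'_def Skn_def by auto
    have xk: "x i \<le> k" using assms(1) \<open>i < n\<close> unfolding Skn_def by auto
    have x'i: "x' i = 0" unfolding x'_def by simp
    have "covers (Skn k n) Sle x' (x'(i := x i))" by (rule cover_I[OF x'S \<open>i < n\<close> x'i False xk])
    moreover have "x'(i := x i) = x" unfolding x'_def by simp
    ultimately have cv: "covers (Skn k n) Sle x' x" by simp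
    have "dd n (x(i := 0)) y + delta (x i) (y i) = dd n x y + delta 0 (y i)" by (rule dd_upd[OF \<open>i<n\<close>])
    moreover have "delta (x i) (y i) = delta 0 (y i) + 1" using False i by (simp add: delta_def)
    ultimately have "dd n x' y + 1 = dd n x y" unfolding x'_def by simp
    then show ?thesis using cv x'S by blast
  qed
qed

lemma cg_path_Cons: assumes "cg_path S le xs" "p \<in> S" "covers S le p (hd xs) \<or> covers S le (hd xs) p"
  shows "cg_path S le (p # xs)"
  unfolding cg_path_def
proof (intro conjI allI impI)
  have ne: "xs \<noteq> []" using assms(1) unfolding cg_path_def by simp
  show "p # xs \<noteq> []" by simp
  show "set (p # xs) \<subseteq> S" using assms unfolding cg_path_def by auto
  fix i assume "Suc i < length (p # xs)"
  then show "covers S le ((p # xs) ! i) ((p # xs) ! Suc i) \<or> covers S le ((p # xs) ! Suc i) ((p # xs) ! i)"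
    using assms ne unfolding cg_path_def by (cases i) (auto simp: hd_conv_nth)
qed

lemma path_exists:
  assumes "p \<in> Skn k n" "u \<in> Skn k n" "q \<in> Skn k n" "dd n p u + dd n u q = dd n p q"
  shows "\<exists>xs. cg_path (Skn k n) Sle xs \<and> hd xs = p \<and> last xs = q \<and> length xs = Suc (dd n p q) \<and> u \<in> set xs"
  using assms
proof (induction "dd n p q" arbitrary: p u)
  case 0
  then have "p = q" using dd_zero by metis
  moreover have "u = p" using 0 dd_zero by (metis add_is_0)
  ultimately show ?case using 0 by (intro exI[of _ "[p]"]) (auto simp: cg_path_def)
next
  case (Suc m)
  have "p \<noteq> q" using Suc.hyps(2) by auto
  show ?case
  proof (cases "p = u")
    case False
    obtain p' where p': "p' \<in> Skn k n" "covers (Skn k n) Sle p p' \<or> covers (Skn k n) Sle p' p"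
      "dd n p' u + 1 = dd n p u" using step_ex[OF Suc.prems(1,2) False] by blast
    have d1: "dd n p p' = 1" using dd_cover' p'(2) by metis
    have "dd n p' q \<le> dd n p' u + dd n u q" by (rule dd_tri)
    moreover have "dd n p q \<le> dd n p p' + dd n p' q" by (rule dd_tri)
    ultimately have e: "m = dd n p' q" "dd n p' u + dd n u q = dd n p' q"
      using Suc.hyps(2) Suc.prems(4) p'(3) d1 by linarith+
    obtain xs where xs: "cg_path (Skn k n) Sle xs" "hd xs = p'" "last xs = q" "length xs = Suc m" "u \<in> set xs"
      using Suc.hyps(1)[OF e(1) p'(1) Suc.prems(2,3) e(2)] e(1) by auto
    have "cg_path (Skn k n) Sle (p # xs)" using cg_path_Cons[OF xs(1) Suc.prems(1)] xs(2) p'(2) by auto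
    moreover have "xs \<noteq> []" using xs(4) by auto
    ultimately show ?thesis using xs Suc.hyps(2) by (intro exI[of _ "p # xs"]) auto
  next
    case True
    obtain p' where p': "p' \<in> Skn k n" "covers (Skn k n) Sle p p' \<or> covers (Skn k n) Sle p' p"
      "dd n p' q + 1 = dd n p q" using step_ex[OF Suc.prems(1,3) \<open>p \<noteq> q\<close>] by blast
    have e: "m = dd n p' q" "dd n p' p' + dd n p' q = dd n p' q" using Suc.hyps(2) p'(3) by auto
    obtain xs where xs: "cg_path (Skn k n) Sle xs" "hd xs = p'" "last xs = q" "length xs = Suc m"
      using Suc.hyps(1)[OF e(1) p'(1) p'(1) Suc.prems(3) e(2)] e(1) by auto
    have "cg_path (Skn k n) Sle (p # xs)" using cg_path_Cons[OF xs(1) Suc.prems(1)] xs(2) p'(2) by auto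
    moreover have "xs \<noteq> []" using xs(4) by auto
    ultimately show ?thesis using xs Suc.hyps(2) True by (intro exI[of _ "p # xs"]) auto
  qed
qed

lemma path_len: assumes "cg_path (Skn k n) Sle xs" "hd xs = p" "last xs = q" "length xs = Suc m"
  shows "dd n p q \<le> m"
proof -
  have "xs \<noteq> []" using assms(4) by auto
  then have "p = xs ! 0" "q = xs ! m" using assms by (auto simp: hd_conv_nth last_conv_nth)
  then show ?thesis using path_dd[OF assms(1), of 0 m] assms(4) by simp
qed

lemma cg_dist_eq: assumes "p \<in> Skn k n" "q \<in> Skn k n"
  shows "cg_dist (Skn k n) Sle p q = dd n p q"
  unfolding cg_dist_def
proof (rule Least_equality)
  show "\<exists>xs. cg_path (Skn k n) Sle xs \<and> hd xs = p \<and> last xs = q \<and> length xs = Suc (dd n p q)"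
    using path_exists[OF assms(1) assms(1) assms(2)] by auto
next
  fix m assume "\<exists>xs. cg_path (Skn k n) Sle xs \<and> hd xs = p \<and> last xs = q \<and> length xs = Suc m"
  then show "dd n p q \<le> m" using path_len by blast
qed

lemma interval_eq: assumes "p \<in> Skn k n" "q \<in> Skn k n"
  shows "interval (Skn k n) Sle p q = {u \<in> Skn k n. dd n p u + dd n u q = dd n p q}"
proof safe
  fix u assume "u \<in> interval (Skn k n) Sle p q"
  then obtain xs where xs: "cg_path (Skn k n) Sle xs" "hd xs = p" "last xs = q"
    "length xs = Suc (dd n p q)" "u \<in> set xs"
    unfolding interval_def cg_dist_eq[OF assms] by auto
  show "u \<in> Skn k n" using xs(1,5) unfolding cg_path_def by auto
  obtain j where j: "j < length xs" "u = xs ! j" using xs(5) by (metis in_set_conv_nth)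
  have ne: "xs \<noteq> []" using xs(4) by auto
  have pq: "p = xs ! 0" "q = xs ! dd n p q" using xs ne by (auto simp: hd_conv_nth last_conv_nth)
  have "dd n p u \<le> j" using path_dd[OF xs(1), of 0 j] j pq by simp
  moreover have "dd n u q \<le> dd n p q - j" using path_dd[OF xs(1), of j "dd n p q"] j pq xs(4) by simp
  moreover have "dd n p q \<le> dd n p u + dd n u q" by (rule dd_tri)
  ultimately show "dd n p u + dd n u q = dd n p q" using j xs(4) by linarith
next
  fix u assume "u \<in> Skn k n" "dd n p u + dd n u q = dd n p q"
  then show "u \<in> interval (Skn k n) Sle p q"
    unfolding interval_def cg_dist_eq[OF assms] using path_exists[OF assms(1) _ assms(2)] by blast
qed

lemma interval_coord: assumes "p \<in> Skn k n" "q \<in> Skn k n" "u \<in> interval (Skn k n) Sle p q" "i < n"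
  shows "delta (p i) (u i) + delta (u i) (q i) = delta (p i) (q i)"
proof -
  have e: "dd n p u + dd n u q = dd n p q" using assms interval_eq by blast
  have le: "\<forall>j\<in>{..<n}. delta (p j) (q j) \<le> delta (p j) (u j) + delta (u j) (q j)" using delta_tri by auto
  show ?thesis
  proof (rule ccontr)
    assume "\<not> ?thesis"
    then have "delta (p i) (q i) < delta (p i) (u i) + delta (u i) (q i)" using le assms(4) delta_tri[of "p i" "q i" "u i"] by linarith
    then have "dd n p q < (\<Sum>j<n. delta (p j) (u j) + delta (u j) (q j))"
      unfolding dd_def using le assms(4) by (intro sum_strict_mono_ex1) auto
    then show False using e unfolding dd_def sum.distrib by simp
  qed
qed

definition hat :: "(nat \<Rightarrow> nat) \<Rightarrow> (nat \<Rightarrow> nat) \<Rightarrow> (nat \<Rightarrow> nat)" where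
  "hat p q = (\<lambda>i. if p i \<noteq> 0 then p i else q i)"

definition Xs :: "nat \<Rightarrow> (nat \<Rightarrow> nat) \<Rightarrow> (nat \<Rightarrow> nat) \<Rightarrow> nat set" where
  "Xs n p u = {i. i < n \<and> u i = p i \<and> p i \<noteq> 0}"

definition Sp :: "nat \<Rightarrow> (nat \<Rightarrow> nat) \<Rightarrow> nat set" where
  "Sp n p = {i. i < n \<and> p i \<noteq> 0}"

lemma kmeet_Skn: "p \<in> Skn k n \<Longrightarrow> q \<in> Skn k n \<Longrightarrow> kmeet p q \<in> Skn k n"
  unfolding Skn_def kmeet_def by auto

lemma kmeet_comm: "kmeet p q = kmeet q p" unfolding kmeet_def by (auto simp: fun_eq_iff)

lemma Sle_kmeet: assumes "Sle x p" "Sle x q" shows "Sle x (kmeet p q)"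
    unfolding Sle_def
  proof
    fix i
    have "x i = 0 \<or> x i = p i" "x i = 0 \<or> x i = q i" using assms unfolding Sle_def by blast+
    then show "x i = 0 \<or> x i = kmeet p q i" unfolding kmeet_def by auto
  qed

lemma glb_eq: assumes "p \<in> Skn k n" "q \<in> Skn k n"
  shows "glb (Skn k n) Sle p q = kmeet p q"
  unfolding glb_def
proof (rule the_equality)
  have "Sle x (kmeet p q)" if "Sle x p" "Sle x q" for x using that by (rule Sle_kmeet)
  then show "kmeet p q \<in> Skn k n \<and> Sle (kmeet p q) p \<and> Sle (kmeet p q) q \<and>
    (\<forall>x\<in>Skn k n. Sle x p \<and> Sle x q \<longrightarrow> Sle x (kmeet p q))"
    using kmeet_Skn[OF assms] unfolding Sle_def kmeet_def by auto
next
  fix m assume m: "m \<in> Skn k n \<and> Sle m p \<and> Sle m q \<and> (\<forall>x\<in>Skn k n. Sle x p \<and> Sle x q \<longrightarrow> Sle x m)"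
  have "Sle (kmeet p q) p" "Sle (kmeet p q) q" unfolding Sle_def kmeet_def by auto
  then have "Sle (kmeet p q) m" using m kmeet_Skn[OF assms] by blast
  moreover have "Sle m (kmeet p q)" using m Sle_kmeet by blast
  ultimately show "m = kmeet p q" using Sle_antisym by blast
qed

lemma Srank_kmeet: "Srank n (kmeet u p) = card (Xs n p u)"
  unfolding Srank_def Xs_def kmeet_def by (rule arg_cong[where f=card]) auto

lemma Xs_sym: "Xs n p q = Xs n q p" unfolding Xs_def by auto

lemma rvec_eq: assumes "p \<in> Skn k n" "q \<in> Skn k n" "u \<in> Skn k n"
  shows "rvec (Skn k n) Sle (Srank n) p q u =
    (real (card (Xs n p u)) - real (card (Xs n p q)), real (card (Xs n q u)) - real (card (Xs n p q)))"
  unfolding rvec_def glb_eq[OF assms(3,1)] glb_eq[OF assms(3,2)] glb_eq[OF assms(1,2)] Srank_kmeet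
  using Xs_sym[of n q p] by (simp add: kmeet_comm Srank_kmeet)


lemma fin_Xs[simp]: "finite (Xs n p u)" unfolding Xs_def by auto
lemma fin_Sp[simp]: "finite (Sp n p)" unfolding Sp_def by auto

lemma Xs_sub: "Xs n p u \<subseteq> Sp n p" unfolding Xs_def Sp_def by auto

lemma Xs_bound: "card (Xs n p u) + card (Xs n q u) \<le> card (Sp n p \<union> Sp n q) + card (Xs n p q)"
proof -
  have "card (Xs n p u) + card (Xs n q u) = card (Xs n p u \<union> Xs n q u) + card (Xs n p u \<inter> Xs n q u)"
    by (rule card_Un_Int) auto
  moreover have "card (Xs n p u \<union> Xs n q u) \<le> card (Sp n p \<union> Sp n q)"
    by (rule card_mono) (auto simp: Xs_def Sp_def)
  moreover have "card (Xs n p u \<inter> Xs n q u) \<le> card (Xs n p q)"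
    by (rule card_mono) (auto simp: Xs_def)
  ultimately show ?thesis by linarith
qed

lemma Sp_bound: "card (Sp n p) + card (Sp n q) = card (Sp n p \<union> Sp n q) + card (Sp n p \<inter> Sp n q)"
  by (rule card_Un_Int) auto

lemma A_sub: "Xs n p q \<subseteq> Sp n p \<inter> Sp n q" unfolding Xs_def Sp_def by auto

lemma Dflag_iff: "(\<exists>i<n. p i \<noteq> 0 \<and> q i \<noteq> 0 \<and> p i \<noteq> q i) \<longleftrightarrow> card (Xs n p q) < card (Sp n p \<inter> Sp n q)"
proof
  assume "\<exists>i<n. p i \<noteq> 0 \<and> q i \<noteq> 0 \<and> p i \<noteq> q i"
  then obtain i where "i < n" "p i \<noteq> 0" "q i \<noteq> 0" "p i \<noteq> q i" by blast
  then have "i \<in> Sp n p \<inter> Sp n q" "i \<notin> Xs n p q" unfolding Sp_def Xs_def by auto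
  then have "Xs n p q \<subset> Sp n p \<inter> Sp n q" using A_sub by blast
  then show "card (Xs n p q) < card (Sp n p \<inter> Sp n q)" by (intro psubset_card_mono) auto
next
  assume c: "card (Xs n p q) < card (Sp n p \<inter> Sp n q)"
  show "\<exists>i<n. p i \<noteq> 0 \<and> q i \<noteq> 0 \<and> p i \<noteq> q i"
  proof (rule ccontr)
    assume "\<not> ?thesis"
    then have "Sp n p \<inter> Sp n q \<subseteq> Xs n p q" unfolding Xs_def Sp_def by auto
    then have "card (Sp n p \<inter> Sp n q) \<le> card (Xs n p q)" by (intro card_mono) auto
    then show False using c by simp
  qed
qed

lemma Xs_hat1: "Xs n p (hat p q) = Sp n p" unfolding Xs_def Sp_def hat_def by auto
lemma Xs_hat2: "Xs n q (hat p q) = Xs n p q \<union> (Sp n q - Sp n p)"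
  unfolding Xs_def Sp_def hat_def by auto

lemma card_diff_Sp: "card (Sp n q - Sp n p) = card (Sp n p \<union> Sp n q) - card (Sp n p)"
proof -
  have "Sp n p \<union> Sp n q = Sp n p \<union> (Sp n q - Sp n p)" by auto
  moreover have "card (Sp n p \<union> (Sp n q - Sp n p)) = card (Sp n p) + card (Sp n q - Sp n p)"
    by (rule card_Un_disjoint) auto
  ultimately have "card (Sp n p \<union> Sp n q) = card (Sp n p) + card (Sp n q - Sp n p)" by simp
  then show ?thesis by simp
qed

lemma card_A_diff: "card (Xs n p q \<union> (Sp n q - Sp n p)) = card (Xs n p q) + card (Sp n q - Sp n p)"
  by (rule card_Un_disjoint) (auto simp: Xs_def Sp_def)

lemma hat_Skn: "p \<in> Skn k n \<Longrightarrow> q \<in> Skn k n \<Longrightarrow> hat p q \<in> Skn k n"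
  unfolding Skn_def hat_def by auto

lemma hat_interval: assumes "p \<in> Skn k n" "q \<in> Skn k n"
  shows "hat p q \<in> interval (Skn k n) Sle p q"
proof -
  have "dd n p (hat p q) + dd n (hat p q) q = dd n p q"
    unfolding dd_def sum.distrib[symmetric]
    by (intro sum.cong) (auto simp: hat_def delta_def)
  then show ?thesis using interval_eq[OF assms] hat_Skn[OF assms] by auto
qed

lemma interval_sym: assumes "p \<in> Skn k n" "q \<in> Skn k n"
  shows "interval (Skn k n) Sle p q = interval (Skn k n) Sle q p"
  using interval_eq[OF assms] interval_eq[OF assms(2,1)] dd_sym by (auto simp: add.commute)

lemma hat_unique: assumes "p \<in> Skn k n" "q \<in> Skn k n" "u \<in> interval (Skn k n) Sle p q"
  and c1: "card (Xs n p u) = card (Sp n p)"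
  and c2: "card (Xs n q u) = card (Xs n p q) + card (Sp n q - Sp n p)"
  shows "u = hat p q"
proof
  fix i
  have uS: "u \<in> Skn k n" using assms(3) interval_eq[OF assms(1,2)] by auto
  have X: "Xs n p u = Sp n p" using c1 Xs_sub by (intro card_subset_eq) auto
  have Ysub: "Xs n q u \<subseteq> Xs n p q \<union> (Sp n q - Sp n p)"
  proof
    fix j assume j: "j \<in> Xs n q u"
    show "j \<in> Xs n p q \<union> (Sp n q - Sp n p)"
    proof (cases "p j = 0")
      case True then show ?thesis using j unfolding Xs_def Sp_def by auto
    next
      case False
      then have "j \<in> Sp n p" using j unfolding Xs_def Sp_def by auto
      then have "u j = p j" using X unfolding Xs_def by auto
      then show ?thesis using j False unfolding Xs_def by auto
    qed
  qed
  have Y: "Xs n q u = Xs n p q \<union> (Sp n q - Sp n p)"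
    using c2 card_A_diff Ysub by (intro card_subset_eq) auto
  show "u i = hat p q i"
  proof (cases "i < n")
    case False then show ?thesis using uS assms(1,2) unfolding Skn_def hat_def by auto
  next
    case True
    show ?thesis
    proof (cases "p i = 0")
      case False
      then have "i \<in> Sp n p" using True unfolding Sp_def by auto
      then show ?thesis using X False unfolding Xs_def hat_def by auto
    next
      case pi: True
      show ?thesis
      proof (cases "q i = 0")
        case False
        then have "i \<in> Sp n q - Sp n p" using True pi unfolding Sp_def by auto
        then show ?thesis using Y pi unfolding Xs_def hat_def by auto
      next
        case qi: True
        have "delta (p i) (u i) + delta (u i) (q i) = delta (p i) (q i)"
          by (rule interval_coord[OF assms(1,2,3) True])
        then show ?thesis using pi qi unfolding hat_def by (auto simp: delta_def split: if_splits)
      qed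
    qed
  qed
qed

definition Dflag :: "nat \<Rightarrow> (nat \<Rightarrow> nat) \<Rightarrow> (nat \<Rightarrow> nat) \<Rightarrow> bool" where
  "Dflag n p q \<longleftrightarrow> (\<exists>i<n. p i \<noteq> 0 \<and> q i \<noteq> 0 \<and> p i \<noteq> q i)"

lemma core:
  assumes pS: "p \<in> Skn k n" and qS: "q \<in> Skn k n"
  shows "Eset (Skn k n) Sle (Srank n) p q = {hat p q, hat q p}"
    "Ccone (Skn k n) Sle (Srank n) p q (hat p q) = (if Dflag n p q then sector (pi/4) 0 else sector (pi/2) 0)"
    "Ccone (Skn k n) Sle (Srank n) p q (hat q p) = (if Dflag n p q then sector (pi/2) (pi/4) else sector (pi/2) 0)"
proof -
  define I where "I = interval (Skn k n) Sle p q"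
  define r where "r = rvec (Skn k n) Sle (Srank n) p q"
  define A where "A = card (Xs n p q)"
  define sp where "sp = card (Sp n p)"
  define sq where "sq = card (Sp n q)"
  define s where "s = card (Sp n p \<union> Sp n q)"
  define a1 where "a1 = real sp - real A"
  define b1 where "b1 = real sq - real A"
  define c where "c = real s - real A"
  have spq: "sp + sq = s + card (Sp n p \<inter> Sp n q)" unfolding sp_def sq_def s_def by (rule Sp_bound)
  have Aint: "A \<le> card (Sp n p \<inter> Sp n q)" unfolding A_def by (intro card_mono A_sub) auto
  have sps: "sp \<le> s" "sq \<le> s" unfolding sp_def sq_def s_def by (intro card_mono; auto)+
  have ISkn: "u \<in> Skn k n" if "u \<in> I" for u using that interval_eq[OF pS qS] unfolding I_def by auto
  have rv: "r u = (real (card (Xs n p u)) - real A, real (card (Xs n q u)) - real A)" if "u \<in> Skn k n" for u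
    unfolding r_def A_def by (rule rvec_eq[OF pS qS that])
  have hV0: "fst (r u) \<le> a1 \<and> snd (r u) \<le> b1 \<and> fst (r u) + snd (r u) \<le> c" if u: "u \<in> I" for u
  proof -
    have "card (Xs n p u) \<le> sp" unfolding sp_def by (intro card_mono Xs_sub) auto
    moreover have "card (Xs n q u) \<le> sq" unfolding sq_def by (intro card_mono Xs_sub) auto
    moreover have "card (Xs n p u) + card (Xs n q u) \<le> s + A" unfolding s_def A_def by (rule Xs_bound)
    ultimately show ?thesis
      using rv[OF ISkn[OF u]] unfolding a1_def b1_def c_def by auto
  qed
  have hV: "r ` I \<subseteq> {z. fst z \<le> a1 \<and> snd z \<le> b1 \<and> fst z + snd z \<le> c}"
    using hV0 by auto
  have h1I: "hat p q \<in> I" unfolding I_def by (rule hat_interval[OF pS qS])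
  have h2I: "hat q p \<in> I" unfolding I_def using hat_interval[OF qS pS] interval_sym[OF pS qS] by simp
  have cd1: "card (Sp n q - Sp n p) = s - sp" unfolding s_def sp_def by (rule card_diff_Sp)
  have cd2: "card (Sp n p - Sp n q) = s - sq" unfolding s_def sq_def using card_diff_Sp[of n p q] by (simp add: Un_commute)
  have r1: "r (hat p q) = (a1, c - a1)"
  proof -
    have "card (Xs n q (hat p q)) = A + (s - sp)"
      unfolding Xs_hat2 card_A_diff cd1 A_def by simp
    then show ?thesis using rv[OF hat_Skn[OF pS qS]] sps unfolding Xs_hat1 a1_def c_def sp_def[symmetric]
      by auto
  qed
  have r2: "r (hat q p) = (c - b1, b1)"
  proof -
    have "card (Xs n p (hat q p)) = card (Xs n q p) + card (Sp n p - Sp n q)"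
      unfolding Xs_hat2 by (rule card_A_diff)
    then have "card (Xs n p (hat q p)) = A + (s - sq)"
      unfolding cd2 A_def Xs_sym[of n q p] by simp
    then show ?thesis using rv[OF hat_Skn[OF qS pS]] sps unfolding Xs_hat1 b1_def c_def sq_def[symmetric]
      by auto
  qed
  have abc: "a1 + b1 \<ge> c" unfolding a1_def b1_def c_def using spq Aint by simp
  have Dc: "Dflag n p q \<longleftrightarrow> a1 + b1 > c"
    unfolding Dflag_def Dflag_iff a1_def b1_def c_def A_def[symmetric] using spq by auto
  interpret G: geo "r ` I" a1 b1 c
    by unfold_locales (use hV r1 r2 h1I h2I abc in \<open>auto intro: rev_image_eqI\<close>)
  have cv: "convI (Skn k n) Sle (Srank n) p q = convex hull (r ` I)"
    unfolding convI_def r_def I_def by simp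
  have "Eset (Skn k n) Sle (Srank n) p q = {u \<in> I. G.good (r u)}"
    unfolding Eset_def G.good_def cv by (simp add: r_def I_def)
  also have "\<dots> = {u \<in> I. r u = (a1, c - a1) \<or> r u = (c - b1, b1)}"
  proof (intro Collect_cong conj_cong refl)
    fix u assume "u \<in> I"
    then have "r u \<in> convex hull (r ` I)" by (intro hull_inc imageI)
    then show "G.good (r u) = (r u = (a1, c - a1) \<or> r u = (c - b1, b1))" by (rule G.good_iff)
  qed
  also have "\<dots> = {hat p q, hat q p}"
  proof -
    have e1: "u = hat p q" if u: "u \<in> I" "r u = (a1, c - a1)" for u
    proof -
      have c1: "card (Xs n p u) = card (Sp n p)" and c2: "card (Xs n q u) = A + (s - sp)"
        using u(2) rv[OF ISkn[OF u(1)]] sps unfolding a1_def c_def sp_def by auto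
      have c2': "card (Xs n q u) = card (Xs n p q) + card (Sp n q - Sp n p)"
        using c2 cd1 unfolding A_def by simp
      show "u = hat p q" by (rule hat_unique[OF pS qS u(1)[unfolded I_def] c1 c2'])
    qed
    have e2: "u = hat q p" if u: "u \<in> I" "r u = (c - b1, b1)" for u
    proof -
      have c1: "card (Xs n q u) = card (Sp n q)" and c2: "card (Xs n p u) = A + (s - sq)"
        using u(2) rv[OF ISkn[OF u(1)]] sps unfolding b1_def c_def sq_def by auto
      have c2': "card (Xs n p u) = card (Xs n q p) + card (Sp n p - Sp n q)"
        using c2 cd2 Xs_sym[of n q p] unfolding A_def by simp
      have uI: "u \<in> interval (Skn k n) Sle q p" using u(1) interval_sym[OF pS qS] unfolding I_def by simp
      show "u = hat q p" by (rule hat_unique[OF qS pS uI c1 c2'])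
    qed
    show ?thesis
    proof (rule set_eqI, rule iffI)
      fix u assume "u \<in> {u \<in> I. r u = (a1, c - a1) \<or> r u = (c - b1, b1)}"
      then show "u \<in> {hat p q, hat q p}" using e1 e2 by blast
    next
      fix u assume "u \<in> {hat p q, hat q p}"
      then show "u \<in> {u \<in> I. r u = (a1, c - a1) \<or> r u = (c - b1, b1)}" using h1I h2I r1 r2 by blast
    qed
  qed
  finally show "Eset (Skn k n) Sle (Srank n) p q = {hat p q, hat q p}" .
  have "Ccone (Skn k n) Sle (Srank n) p q (hat p q) =
     {w. fst w \<ge> 0 \<and> snd w \<ge> 0 \<and> inner w (a1, c - a1) = (SUP y\<in>convex hull (r ` I). inner w y)}"
    unfolding Ccone_def cv r1[symmetric] by (simp add: r_def)
  also have "\<dots> = (if Dflag n p q then sector (pi/4) 0 else sector (pi/2) 0)"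
    unfolding G.cone1 Dc sectA sectC by simp
  finally show "Ccone (Skn k n) Sle (Srank n) p q (hat p q) = (if Dflag n p q then sector (pi/4) 0 else sector (pi/2) 0)" .
  have "Ccone (Skn k n) Sle (Srank n) p q (hat q p) =
     {w. fst w \<ge> 0 \<and> snd w \<ge> 0 \<and> inner w (c - b1, b1) = (SUP y\<in>convex hull (r ` I). inner w y)}"
    unfolding Ccone_def cv r2[symmetric] by (simp add: r_def)
  also have "\<dots> = (if Dflag n p q then sector (pi/2) (pi/4) else sector (pi/2) 0)"
    unfolding G.cone2 Dc sectB sectC by simp
  finally show "Ccone (Skn k n) Sle (Srank n) p q (hat q p) = (if Dflag n p q then sector (pi/2) (pi/4) else sector (pi/2) 0)" .
qed

lemma ereal_fin2: "(a::ereal) \<noteq> -\<infinity> \<Longrightarrow> b \<noteq> -\<infinity> \<Longrightarrow> a + b \<le> ereal x \<Longrightarrow> \<exists>r s. a = ereal r \<and> b = ereal s"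
  by (cases a; cases b) auto

lemma ereal_inf_sum: "(a::ereal) \<noteq> -\<infinity> \<Longrightarrow> b \<noteq> -\<infinity> \<Longrightarrow> a = \<infinity> \<or> b = \<infinity> \<Longrightarrow> a + b = \<infinity>"
  by (cases a; cases b) auto

lemma ereal_fwd:
  fixes P Q M J AC U U' :: ereal
  assumes nn: "P \<noteq> -\<infinity>" "Q \<noteq> -\<infinity>" "M \<noteq> -\<infinity>" "J \<noteq> -\<infinity>" "AC \<noteq> -\<infinity>" "U \<noteq> -\<infinity>" "U' \<noteq> -\<infinity>"
    and h1: "AC + P \<ge> M + U" and h2: "P + Q \<ge> M + J" and h3: "Q + J \<ge> AC + U'"
  shows "P + Q \<ge> M + (ereal (1/2) * U + ereal (1/2) * U')"
proof (cases "P = \<infinity> \<or> Q = \<infinity>")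
  case True
  have "P + Q = \<infinity>" using nn ereal_inf_sum True by blast
  then show ?thesis by (metis ereal_less_eq(1))
next
  case False
  then obtain p q where pq: "P = ereal p" "Q = ereal q" using nn by (cases P; cases Q) auto
  obtain m j where mj: "M = ereal m" "J = ereal j" using ereal_fin2[OF nn(3,4), of "p+q"] h2 pq by auto
  obtain ac u' where au: "AC = ereal ac" "U' = ereal u'" using ereal_fin2[OF nn(5,7), of "q+j"] h3 pq mj by auto
  obtain mm u where mu: "M = ereal mm" "U = ereal u" using ereal_fin2[OF nn(3,6), of "ac+p"] h1 pq au by auto
  show ?thesis using h1 h2 h3 pq mj au mu by simp
qed

lemma ereal_bwd:
  fixes P Q M J U U' :: ereal
  assumes nn: "P \<noteq> -\<infinity>" "Q \<noteq> -\<infinity>" "M \<noteq> -\<infinity>" "J \<noteq> -\<infinity>" "U \<noteq> -\<infinity>" "U' \<noteq> -\<infinity>"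
    and h1: "P + Q \<ge> M + (ereal (1/2) * U + ereal (1/2) * U')"
    and h2: "U + U' \<ge> J + (ereal (1/2) * U + ereal (1/2) * U')"
  shows "P + Q \<ge> M + J"
proof (cases "P = \<infinity> \<or> Q = \<infinity>")
  case True
  have "P + Q = \<infinity>" using nn ereal_inf_sum True by blast
  then show ?thesis by (metis ereal_less_eq(1))
next
  case False
  then obtain p q where pq: "P = ereal p" "Q = ereal q" using nn by (cases P; cases Q) auto
  have hU: "ereal (1/2) * U \<noteq> -\<infinity>" "ereal (1/2) * U' \<noteq> -\<infinity>" using nn by (cases U; simp; cases U'; simp)+
  have "ereal (1/2) * U + ereal (1/2) * U' \<noteq> -\<infinity>" using hU by simp
  then obtain m s where ms: "M = ereal m" "ereal (1/2) * U + ereal (1/2) * U' = ereal s"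
    using ereal_fin2[OF nn(3), of "ereal (1/2) * U + ereal (1/2) * U'" "p+q"] h1 pq by auto
  obtain x y where xy: "ereal (1/2) * U = ereal x" "ereal (1/2) * U' = ereal y"
    using ereal_fin2[OF hU, of s] ms by auto
  obtain u u' where uu: "U = ereal u" "U' = ereal u'" using xy nn by (cases U; cases U') auto
  obtain j where jj: "J = ereal j" using h2 uu nn(4) by (cases J) auto
  show ?thesis using h1 h2 pq ms uu jj by simp
qed

lemma kjoin_Skn: "p \<in> Skn k n \<Longrightarrow> q \<in> Skn k n \<Longrightarrow> kjoin p q \<in> Skn k n"
  unfolding Skn_def kjoin_def by auto

lemma hat_eq_kjoin: assumes "p \<in> Skn k n" "q \<in> Skn k n" "\<not> Dflag n p q"
  shows "hat p q = kjoin p q" "hat q p = kjoin p q"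
proof -
  have d: "p i \<noteq> 0 \<Longrightarrow> q i \<noteq> 0 \<Longrightarrow> p i = q i" for i
  proof (cases "i < n")
    case True then show "p i \<noteq> 0 \<Longrightarrow> q i \<noteq> 0 \<Longrightarrow> p i = q i" using assms(3) unfolding Dflag_def by blast
  next
    case False then show "p i \<noteq> 0 \<Longrightarrow> q i \<noteq> 0 \<Longrightarrow> p i = q i" using assms(1) unfolding Skn_def by auto
  qed
  show "hat p q = kjoin p q"
  proof
    fix i show "hat p q i = kjoin p q i" using d[of i] by (auto simp: hat_def kjoin_def)
  qed
  show "hat q p = kjoin p q"
  proof
    fix i show "hat q p i = kjoin p q i" using d[of i] by (auto simp: hat_def kjoin_def)
  qed
qed

lemma hat_ne: assumes "Dflag n p q" shows "hat p q \<noteq> hat q p"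
proof -
  obtain i where "p i \<noteq> 0" "q i \<noteq> 0" "p i \<noteq> q i" using assms unfolding Dflag_def by blast
  then have "hat p q i \<noteq> hat q p i" unfolding hat_def by simp
  then show ?thesis by metis
qed

lemma sum_formula:
  assumes pS: "p \<in> Skn k n" and qS: "q \<in> Skn k n"
  shows "(\<Sum>u\<in>{u \<in> Eset (Skn k n) Sle (Srank n) p q. cone_coef (Ccone (Skn k n) Sle (Srank n) p q u) \<noteq> 0}.
            ereal (cone_coef (Ccone (Skn k n) Sle (Srank n) p q u)) * f u)
       = (if Dflag n p q then ereal (1/2) * f (hat p q) + ereal (1/2) * f (hat q p) else f (kjoin p q))"
proof (cases "Dflag n p q")
  case True
  have c1: "cone_coef (Ccone (Skn k n) Sle (Srank n) p q (hat p q)) = 1/2"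
    using core(2)[OF pS qS] True coef_A by simp
  have c2: "cone_coef (Ccone (Skn k n) Sle (Srank n) p q (hat q p)) = 1/2"
    using core(3)[OF pS qS] True coef_B by simp
  have "{u \<in> Eset (Skn k n) Sle (Srank n) p q. cone_coef (Ccone (Skn k n) Sle (Srank n) p q u) \<noteq> 0} = {hat p q, hat q p}"
    using core(1)[OF pS qS] c1 c2 by auto
  then have "(\<Sum>u\<in>{u \<in> Eset (Skn k n) Sle (Srank n) p q. cone_coef (Ccone (Skn k n) Sle (Srank n) p q u) \<noteq> 0}.
            ereal (cone_coef (Ccone (Skn k n) Sle (Srank n) p q u)) * f u)
     = ereal (cone_coef (Ccone (Skn k n) Sle (Srank n) p q (hat p q))) * f (hat p q) +
       ereal (cone_coef (Ccone (Skn k n) Sle (Srank n) p q (hat q p))) * f (hat q p)"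
    using hat_ne[OF True] by simp
  also have "\<dots> = ereal (1/2) * f (hat p q) + ereal (1/2) * f (hat q p)" unfolding c1 c2 ..
  finally show ?thesis using True by simp
next
  case False
  have e: "hat q p = hat p q" using hat_eq_kjoin[OF pS qS False] by simp
  have c1: "cone_coef (Ccone (Skn k n) Sle (Srank n) p q (hat p q)) = 1"
    using core(2)[OF pS qS] False coef_C by simp
  have "{u \<in> Eset (Skn k n) Sle (Srank n) p q. cone_coef (Ccone (Skn k n) Sle (Srank n) p q u) \<noteq> 0} = {hat p q}"
    using core(1)[OF pS qS] c1 e by auto
  then show ?thesis using False c1 hat_eq_kjoin[OF pS qS False] by (simp add: one_ereal_def[symmetric])
qed

lemma submod_pair:
  assumes pS: "p \<in> Skn k n" and qS: "q \<in> Skn k n"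
  shows "(f p + f q \<ge> f (glb (Skn k n) Sle p q) +
        (\<Sum>u\<in>{u \<in> Eset (Skn k n) Sle (Srank n) p q. cone_coef (Ccone (Skn k n) Sle (Srank n) p q u) \<noteq> 0}.
            ereal (cone_coef (Ccone (Skn k n) Sle (Srank n) p q u)) * f u))
     \<longleftrightarrow> (f p + f q \<ge> f (kmeet p q) +
          (if Dflag n p q then ereal (1/2) * f (hat p q) + ereal (1/2) * f (hat q p) else f (kjoin p q)))"
  unfolding sum_formula[OF pS qS] glb_eq[OF pS qS] ..

lemma pw1: "kmeet (kmeet q (kjoin p q)) p = kmeet p q"
  unfolding kmeet_def kjoin_def by (auto simp: fun_eq_iff)
lemma pw2: "kjoin (kmeet q (kjoin p q)) p = hat p q"
  unfolding kmeet_def kjoin_def hat_def by (auto simp: fun_eq_iff)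
lemma pw3: "kjoin q (kjoin p q) = hat q p"
  unfolding kjoin_def hat_def by (auto simp: fun_eq_iff)
lemma pw4: "kmeet (hat p q) (hat q p) = kjoin p q"
  unfolding kmeet_def kjoin_def hat_def by (auto simp: fun_eq_iff)
lemma pw5: "hat (hat p q) (hat q p) = hat p q"
  unfolding hat_def by (auto simp: fun_eq_iff)
lemma Dflag_hat: "Dflag n p q \<Longrightarrow> Dflag n (hat p q) (hat q p)"
  unfolding Dflag_def hat_def by auto

theorem theorem3p12:
  fixes k n :: nat and f :: "(nat \<Rightarrow> nat) \<Rightarrow> ereal"
  assumes "k \<ge> 2" and "n \<ge> 1"
    and "\<forall>p\<in>Skn k n. f p \<noteq> -\<infinity>"
  shows "k_submodular k n f \<longleftrightarrow> submodular_on (Skn k n) Sle (Srank n) f"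
proof
  assume ks: "k_submodular k n f"
  have ks': "f (kmeet x y) + f (kjoin x y) \<le> f x + f y" if "x \<in> Skn k n" "y \<in> Skn k n" for x y
    using ks that unfolding k_submodular_def by blast
  show "submodular_on (Skn k n) Sle (Srank n) f"
    unfolding submodular_on_def
  proof (intro ballI)
    fix p q assume pS: "p \<in> Skn k n" and qS: "q \<in> Skn k n"
    show "f p + f q \<ge> f (glb (Skn k n) Sle p q) +
        (\<Sum>u\<in>{u \<in> Eset (Skn k n) Sle (Srank n) p q. cone_coef (Ccone (Skn k n) Sle (Srank n) p q u) \<noteq> 0}.
            ereal (cone_coef (Ccone (Skn k n) Sle (Srank n) p q u)) * f u)"
    proof -
      have "f (kmeet p q) + (if Dflag n p q then ereal (1/2) * f (hat p q) + ereal (1/2) * f (hat q p) else f (kjoin p q)) \<le> f p + f q"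
    proof (cases "Dflag n p q")
      case False then show ?thesis using ks'[OF pS qS] by simp
    next
      case True
      define j where "j = kjoin p q"
      define ac where "ac = kmeet q j"
      have jS: "j \<in> Skn k n" unfolding j_def by (rule kjoin_Skn[OF pS qS])
      have acS: "ac \<in> Skn k n" unfolding ac_def by (rule kmeet_Skn[OF qS jS])
      have h1: "f (kmeet p q) + f (hat p q) \<le> f ac + f p"
        using ks'[OF acS pS] unfolding ac_def j_def pw1 pw2 .
      have h2: "f (kmeet p q) + f j \<le> f p + f q" using ks'[OF pS qS] unfolding j_def .
      have h3: "f ac + f (hat q p) \<le> f q + f j"
        using ks'[OF qS jS] unfolding ac_def j_def pw3 .
      have nn: "f x \<noteq> -\<infinity>" if "x \<in> Skn k n" for x using assms(3) that by blast
      show ?thesis using True ereal_fwd[OF nn[OF pS] nn[OF qS] nn[OF kmeet_Skn[OF pS qS]] nn[OF jS] nn[OF acS]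
          nn[OF hat_Skn[OF pS qS]] nn[OF hat_Skn[OF qS pS]] h1 h2 h3] by simp
    qed
      then show ?thesis using submod_pair[OF pS qS] by blast
    qed
  qed
next
  assume sm: "submodular_on (Skn k n) Sle (Srank n) f"
  have sm': "f (kmeet x y) + (if Dflag n x y then ereal (1/2) * f (hat x y) + ereal (1/2) * f (hat y x) else f (kjoin x y)) \<le> f x + f y"
    if "x \<in> Skn k n" "y \<in> Skn k n" for x y
  proof -
    have "f (glb (Skn k n) Sle x y) +
        (\<Sum>u\<in>{u \<in> Eset (Skn k n) Sle (Srank n) x y. cone_coef (Ccone (Skn k n) Sle (Srank n) x y u) \<noteq> 0}.
            ereal (cone_coef (Ccone (Skn k n) Sle (Srank n) x y u)) * f u) \<le> f x + f y"
      using sm that unfolding submodular_on_def by blast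
    then show ?thesis using submod_pair[OF that] by blast
  qed
  show "k_submodular k n f"
    unfolding k_submodular_def
  proof (intro ballI)
    fix p q assume pS: "p \<in> Skn k n" and qS: "q \<in> Skn k n"
    show "f (kmeet p q) + f (kjoin p q) \<le> f p + f q"
    proof (cases "Dflag n p q")
      case False then show ?thesis using sm'[OF pS qS] by simp
    next
      case True
      have h1S: "hat p q \<in> Skn k n" and h2S: "hat q p \<in> Skn k n" using hat_Skn pS qS by auto
      have nn: "f x \<noteq> -\<infinity>" if "x \<in> Skn k n" for x using assms(3) that by blast
      have a1: "f (kmeet p q) + (ereal (1/2) * f (hat p q) + ereal (1/2) * f (hat q p)) \<le> f p + f q"
        using sm'[OF pS qS] True by simp
      have a2: "f (kjoin p q) + (ereal (1/2) * f (hat p q) + ereal (1/2) * f (hat q p)) \<le> f (hat p q) + f (hat q p)"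
        using sm'[OF h1S h2S] Dflag_hat[OF True] unfolding pw4 pw5 pw5[of q p] by simp
      show ?thesis using ereal_bwd[OF nn[OF pS] nn[OF qS] nn[OF kmeet_Skn[OF pS qS]] nn[OF kjoin_Skn[OF pS qS]]
          nn[OF h1S] nn[OF h2S] a1 a2] .
    qed
  qed
qed

end
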